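(* Let $Q$ be a probability distribution over functions $g:\mathcal X\to\mathbb R$, and fix an integer $k\ge 1$. Let $G=\{g_1,\dots,g_k\}\sim Q^k$ and $G'=\{g'_1,\dots,g'_k\}\sim Q^k$ be independent (each consisting of $k$ i.i.d. draws from $Q$). Define \[ f_1=\arg\min_{f\in V(G)}\mathrm{MSE}(f),\qquad f_2=\arg\min_{f\in V(G')}\mathrm{MSE}(f). \] Then \[ \mathbb E_{f_1,f_2}\big[D(f_1,f_2)\big]\le 4\big(\bar R_k-\bar R_{2k}\big). \]
   Context: $P$ is a probability distribution on $\mathcal X\times\mathcal Y$ with $\mathcal X\subseteq\mathbb R^m$ and $\mathcal Y\subseteq\mathbb R$; unless stated otherwise, expectations are over $(x,y)\sim P$ (or its $x$-marginal), and all functions are assumed square-integrable. For $f:\mathcal X\to\mathbb R$, $\mathrm{MSE}(f)=\mathbb E[(y-f(x))^2]$. The disagreement of two functions is $D(f_1,f_2)=\mathbb E[(f_1(x)-f_2(x))^2]$. For a finite multiset $G$ of functions $\mathcal X\to\mathbb R$, $V(G)$ denotes their linear span and $R(G)=\min_{f\in V(G)}\mathrm{MSE}(f)$. For $t\in\mathbb N$, $\bar R_t=\mathbb E_{\{g_1,\dots,g_t\}\sim Q^t}[R(\{g_1,\dots,g_t\})]$, the expectation over $t$ i.i.d. draws from $Q$. In the conclusion, the outer expectation is over the random draws of $G$ and $G'$. *)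

theory Defs
  imports "HOL-Probability.Probability"
begin

definition MSE :: "((real^'m) \<times> real) measure \<Rightarrow> (real^'m \<Rightarrow> real) \<Rightarrow> real" where
  "MSE P f = (\<integral>z. (snd z - f (fst z))^2 \<partial>P)"

definition Dis :: "((real^'m) \<times> real) measure \<Rightarrow> (real^'m \<Rightarrow> real) \<Rightarrow> (real^'m \<Rightarrow> real) \<Rightarrow> real" where
  "Dis P f1 f2 = (\<integral>z. (f1 (fst z) - f2 (fst z))^2 \<partial>P)"

definition V :: "nat \<Rightarrow> (nat \<Rightarrow> (real^'m \<Rightarrow> real)) \<Rightarrow> (real^'m \<Rightarrow> real) set" where
  "V t G = {(\<lambda>x. \<Sum>i<t. c i * G i x) | c. True}"

definition R :: "((real^'m) \<times> real) measure \<Rightarrow> nat \<Rightarrow> (nat \<Rightarrow> (real^'m \<Rightarrow> real)) \<Rightarrow> real" where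
  "R P t G = (INF f\<in>V t G. MSE P f)"

definition Rbar :: "((real^'m) \<times> real) measure \<Rightarrow> (real^'m \<Rightarrow> real) measure \<Rightarrow> nat \<Rightarrow> real" where
  "Rbar P Q t = (\<integral>G. R P t G \<partial>(PiM {..<t} (\<lambda>_. Q)))"

definition fit :: "((real^'m) \<times> real) measure \<Rightarrow> nat \<Rightarrow> (nat \<Rightarrow> (real^'m \<Rightarrow> real)) \<Rightarrow> (real^'m \<Rightarrow> real)" where
  "fit P t G = (SOME f. f \<in> V t G \<and> (\<forall>h\<in>V t G. MSE P f \<le> MSE P h))"

end

theory Submission
  imports Defs
begin


definition res :: "('z \<Rightarrow> real) \<Rightarrow> (nat \<Rightarrow> 'z \<Rightarrow> real) \<Rightarrow> nat \<Rightarrow> (nat \<Rightarrow> real) \<Rightarrow> 'z \<Rightarrow> real" where "res t g n c = (\<lambda>z. t z - (\<Sum>i<n. c i * g i z))"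

locale sip =
  fixes L :: "('z \<Rightarrow> real) set" and ip :: "('z \<Rightarrow> real) \<Rightarrow> ('z \<Rightarrow> real) \<Rightarrow> real"
  assumes L_zero: "(\<lambda>z. 0) \<in> L"
  and L_add: "u \<in> L \<Longrightarrow> v \<in> L \<Longrightarrow> (\<lambda>z. u z + v z) \<in> L"
  and L_scale: "u \<in> L \<Longrightarrow> (\<lambda>z. a * u z) \<in> L"
  and ip_add: "u \<in> L \<Longrightarrow> v \<in> L \<Longrightarrow> w \<in> L \<Longrightarrow> ip (\<lambda>z. u z + v z) w = ip u w + ip v w"
  and ip_scale: "u \<in> L \<Longrightarrow> w \<in> L \<Longrightarrow> ip (\<lambda>z. a * u z) w = a * ip u w"
  and ip_sym: "u \<in> L \<Longrightarrow> v \<in> L \<Longrightarrow> ip u v = ip v u"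
  and ip_pos: "u \<in> L \<Longrightarrow> ip u u \<ge> 0"
begin

lemma L_diff: "u \<in> L \<Longrightarrow> v \<in> L \<Longrightarrow> (\<lambda>z. u z - v z) \<in> L"
  using L_add[of u "\<lambda>z. (-1) * v z"] L_scale[of v "-1"] by simp

lemma L_sum: "(\<And>i. i \<in> A \<Longrightarrow> g i \<in> L) \<Longrightarrow> (\<lambda>z. \<Sum>i\<in>A. c i * g i z) \<in> L"
proof (induction A rule: infinite_finite_induct)
  case (infinite A) then show ?case using L_zero by simp
next
  case empty then show ?case using L_zero by simp
next
  case (insert x F)
  then show ?case using L_add[OF L_scale[of "g x" "c x"], of "\<lambda>z. \<Sum>i\<in>F. c i * g i z"] by simp
qed

lemma ip_diff: "u \<in> L \<Longrightarrow> v \<in> L \<Longrightarrow> w \<in> L \<Longrightarrow> ip (\<lambda>z. u z - v z) w = ip u w - ip v w"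
  using ip_add[of u "\<lambda>z. (-1) * v z" w] ip_scale[of v w "-1"] L_scale[of v "-1"] by simp

lemma ip_zero: "w \<in> L \<Longrightarrow> ip (\<lambda>z. 0) w = 0"
  using ip_scale[of "\<lambda>z. 0" w 0] L_zero by simp

lemma ip_sum: "(\<And>i. i \<in> A \<Longrightarrow> g i \<in> L) \<Longrightarrow> w \<in> L \<Longrightarrow>
   ip (\<lambda>z. \<Sum>i\<in>A. c i * g i z) w = (\<Sum>i\<in>A. c i * ip (g i) w)"
proof (induction A rule: infinite_finite_induct)
  case (infinite A) then show ?case using ip_zero by simp
next
  case empty then show ?case using ip_zero by simp
next
  case (insert x F)
  have "ip (\<lambda>z. \<Sum>i\<in>insert x F. c i * g i z) w = ip (\<lambda>z. c x * g x z + (\<Sum>i\<in>F. c i * g i z)) w"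
    using insert by simp
  also have "\<dots> = c x * ip (g x) w + ip (\<lambda>z. \<Sum>i\<in>F. c i * g i z) w"
    using insert by (simp add: ip_add L_scale L_sum ip_scale)
  finally show ?case using insert by simp
qed

lemmas Lsimps = L_zero L_add L_scale L_diff L_sum

lemma ip_diff_r: "u \<in> L \<Longrightarrow> v \<in> L \<Longrightarrow> w \<in> L \<Longrightarrow> ip w (\<lambda>z. u z - v z) = ip w u - ip w v"
  using ip_sym[of w "\<lambda>z. u z - v z"] ip_sym[of w u] ip_sym[of w v] ip_diff[of u v w] L_diff[of u v] by simp
lemma ip_add_r: "u \<in> L \<Longrightarrow> v \<in> L \<Longrightarrow> w \<in> L \<Longrightarrow> ip w (\<lambda>z. u z + v z) = ip w u + ip w v"
  using ip_sym[of w "\<lambda>z. u z + v z"] ip_sym[of w u] ip_sym[of w v] ip_add[of u v w] L_add[of u v] by simp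
lemma ip_scale_r: "u \<in> L \<Longrightarrow> w \<in> L \<Longrightarrow> ip w (\<lambda>z. a * u z) = a * ip w u"
  using ip_sym[of w "\<lambda>z. a * u z"] ip_sym[of w u] ip_scale[of u w a] L_scale[of u a] by simp

lemma N_diff_scale: "u \<in> L \<Longrightarrow> v \<in> L \<Longrightarrow>
  ip (\<lambda>z. u z - s * v z) (\<lambda>z. u z - s * v z) = ip u u - 2 * s * (ip u v) + s^2 * (ip v v)"
proof -
  assume u: "u \<in> L" and v: "v \<in> L"
  have sv: "(\<lambda>z. s * v z) \<in> L" using L_scale[OF v] .
  have d: "(\<lambda>z. u z - s * v z) \<in> L" using L_diff[OF u sv] .
  have "ip (\<lambda>z. u z - s * v z) (\<lambda>z. u z - s * v z) = ip u (\<lambda>z. u z - s * v z) - ip (\<lambda>z. s * v z) (\<lambda>z. u z - s * v z)"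
    using ip_diff[OF u sv d] .
  also have "\<dots> = ip u (\<lambda>z. u z - s * v z) - s * ip v (\<lambda>z. u z - s * v z)"
    using ip_scale[OF v d] by simp
  also have "ip u (\<lambda>z. u z - s * v z) = ip u u - s * ip u v"
    using ip_diff_r[OF u sv u] ip_scale_r[OF v u] by simp
  also have "ip v (\<lambda>z. u z - s * v z) = ip v u - s * ip v v"
    using ip_diff_r[OF u sv v] ip_scale_r[OF v v] by simp
  finally show ?thesis using ip_sym[OF u v] by (simp add: power2_eq_square algebra_simps)
qed

lemma N_add: "u \<in> L \<Longrightarrow> v \<in> L \<Longrightarrow>
  ip (\<lambda>z. u z + v z) (\<lambda>z. u z + v z) = ip u u + 2 * (ip u v) + ip v v"
proof -
  assume u: "u \<in> L" and v: "v \<in> L"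
  have d: "(\<lambda>z. u z + v z) \<in> L" using L_add[OF u v] .
  show ?thesis using ip_add[OF u v d] ip_add_r[OF u v u] ip_add_r[OF u v v] ip_sym[OF u v] by simp
qed

lemma quad_zero:
  fixes a b :: real
  assumes "\<And>s. 0 \<le> s^2 * a - 2 * s * b" "a \<ge> 0" shows "b = 0"
proof (rule ccontr)
  assume "b \<noteq> 0"
  define s where "s = b / (a+1)"
  have a1: "a + 1 \<noteq> 0" using assms(2) by simp
  have sa: "s * (a+1) = b" using a1 unfolding s_def by simp
  have "(a+1)^2 * (s^2 * a - 2 * s * b) = (s*(a+1))^2*a - 2*(a+1)*b*(s*(a+1))"
    by (simp add: algebra_simps power2_eq_square)
  also have "\<dots> = - (b^2*(a+2))" unfolding sa by (simp add: algebra_simps power2_eq_square)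
  finally have "(a+1)^2 * (s^2 * a - 2 * s * b) = - (b^2*(a+2))" .
  moreover have "b^2*(a+2) > 0" using \<open>b \<noteq> 0\<close> assms(2) by simp
  moreover have "(a+1)^2 * (s^2 * a - 2 * s * b) \<ge> 0" using assms(1)[of s] by simp
  ultimately show False by linarith
qed



lemma res_L: "t \<in> L \<Longrightarrow> \<forall>i<n. g i \<in> L \<Longrightarrow> res t g n c \<in> L"
  unfolding res_def by (intro L_diff L_sum) auto

lemma ortho:
  assumes t: "t \<in> L" and g: "\<forall>i<n. g i \<in> L"
    and opt: "\<forall>a. ip (res t g n c) (res t g n c) \<le> ip (res t g n a) (res t g n a)"
    and j: "j < n"
  shows "ip (res t g n c) (g j) = 0"
proof -
  let ?e = "res t g n c"
  have eL: "?e \<in> L" using res_L t g by blast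
  have gj: "g j \<in> L" using g j by auto
  have "0 \<le> s^2 * ip (g j) (g j) - 2 * s * ip ?e (g j)" for s
  proof -
    define a where "a = (\<lambda>i. c i + (if i = j then s else 0))"
    have "(\<Sum>i<n. a i * g i z) = (\<Sum>i<n. c i * g i z) + s * g j z" for z
    proof -
      have "(\<Sum>i<n. a i * g i z) = (\<Sum>i<n. c i * g i z + (if i = j then s * g i z else 0))"
        unfolding a_def by (intro sum.cong) (auto simp: distrib_right)
      also have "\<dots> = (\<Sum>i<n. c i * g i z) + (\<Sum>i<n. (if i = j then s * g i z else 0))"
        by (rule sum.distrib)
      also have "(\<Sum>i<n. (if i = j then s * g i z else 0)) = s * g j z"
        using j by (subst sum.delta) simp_all
      finally show ?thesis .
    qed
    then have "res t g n a = (\<lambda>z. ?e z - s * g j z)"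
      unfolding res_def by (simp add: algebra_simps)
    then have "ip (res t g n a) (res t g n a) = ip ?e ?e - 2 * s * ip ?e (g j) + s^2 * ip (g j) (g j)"
      using N_diff_scale[OF eL gj] by simp
    then show ?thesis using opt[rule_format, of a] by simp
  qed
  then show ?thesis using quad_zero ip_pos[OF gj] by blast
qed

lemma ortho_span:
  assumes t: "t \<in> L" and g: "\<forall>i<n. g i \<in> L"
    and opt: "\<forall>a. ip (res t g n c) (res t g n c) \<le> ip (res t g n a) (res t g n a)"
  shows "ip (\<lambda>z. \<Sum>i<n. w i * g i z) (res t g n c) = 0"
  using ip_sum[of "{..<n}" g "res t g n c" w] ortho[OF t g opt] ip_sym res_L[OF t g] g
  by simp

lemma lin_zero:
  fixes A B :: real
  assumes "\<And>s. 0 \<le> A - 2 * s * B" shows "B = 0"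
proof (rule ccontr)
  assume "B \<noteq> 0"
  have "A - 2 * ((A+1)/(2*B)) * B = -1" using \<open>B \<noteq> 0\<close> by (simp add: field_simps)
  then show False using assms[of "(A+1)/(2*B)"] by linarith
qed

lemma best_exists:
  "t \<in> L \<Longrightarrow> \<forall>i<n. g i \<in> L \<Longrightarrow> \<exists>c. \<forall>a. ip (res t g n c) (res t g n c) \<le> ip (res t g n a) (res t g n a)"
proof (induction n arbitrary: t)
  case 0
  then show ?case by (simp add: res_def)
next
  case (Suc n)
  have t: "t \<in> L" and g: "\<forall>i<n. g i \<in> L" and gn: "g n \<in> L" using Suc.prems by auto
  obtain c where c: "\<forall>a. ip (res t g n c) (res t g n c) \<le> ip (res t g n a) (res t g n a)"
    using Suc.IH[OF t g] by blast
  obtain d where d: "\<forall>a. ip (res (g n) g n d) (res (g n) g n d) \<le> ip (res (g n) g n a) (res (g n) g n a)"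
    using Suc.IH[OF gn g] by blast
  define e where "e = res t g n c"
  define r where "r = res (g n) g n d"
  have eL: "e \<in> L" unfolding e_def using res_L[OF t g] .
  have rL: "r \<in> L" unfolding r_def using res_L[OF gn g] .
  have oe: "ip (\<lambda>z. \<Sum>i<n. w i * g i z) e = 0" for w
    unfolding e_def using ortho_span[OF t g c] .
  have or: "ip (\<lambda>z. \<Sum>i<n. w i * g i z) r = 0" for w
    unfolding r_def using ortho_span[OF gn g d] .
  have Ner: "ip (\<lambda>z. e z - s * r z) (\<lambda>z. e z - s * r z) = ip e e - 2 * s * (ip e r) + s^2 * (ip r r)" for s
    using N_diff_scale[OF eL rL] .
  define s0 where "s0 = (if ip r r = 0 then 0 else ip e r / ip r r)"
  have best_s: "ip (\<lambda>z. e z - s0 * r z) (\<lambda>z. e z - s0 * r z) \<le> ip (\<lambda>z. e z - s * r z) (\<lambda>z. e z - s * r z)" for s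
  proof (cases "ip r r = 0")
    case True
    have "0 \<le> ip e e - 2 * s * ip e r" for s
      using ip_pos[OF L_diff[OF eL L_scale[OF rL]], of s] Ner[of s] True by simp
    then have "ip e r = 0" using lin_zero by blast
    then show ?thesis using Ner True by simp
  next
    case False
    have q: "ip r r > 0" using False ip_pos[OF rL] by simp
    have s0q: "s0 * ip r r = ip e r" using False unfolding s0_def by simp
    have "ip e e - 2 * s * (ip e r) + s^2 * (ip r r) - (ip e e - 2 * s0 * (ip e r) + s0^2 * (ip r r))
          = ip r r * (s - s0)^2"
      unfolding s0q[symmetric] by (simp add: algebra_simps power2_eq_square)
    moreover have "ip r r * (s - s0)^2 \<ge> 0" using q by simp
    ultimately show ?thesis using Ner[of s] Ner[of s0] by linarith
  qed
  define cs where "cs = (\<lambda>i. if i = n then s0 else c i - s0 * d i)"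
  have cs_eq: "res t g (Suc n) cs = (\<lambda>z. e z - s0 * r z)"
  proof
    fix z
    have "(\<Sum>i<n. cs i * g i z) = (\<Sum>i<n. c i * g i z) - s0 * (\<Sum>i<n. d i * g i z)"
      unfolding cs_def by (simp add: algebra_simps sum_subtractf sum_distrib_left)
    then show "res t g (Suc n) cs z = e z - s0 * r z"
      unfolding e_def r_def res_def by (simp add: cs_def algebra_simps)
  qed
  have "ip (res t g (Suc n) cs) (res t g (Suc n) cs) \<le> ip (res t g (Suc n) a) (res t g (Suc n) a)" for a
  proof -
    define W where "W = (\<lambda>z. \<Sum>i<n. (c i - a i - a n * d i) * g i z)"
    define v where "v = (\<lambda>z. e z - a n * r z)"
    have WL: "W \<in> L" unfolding W_def using g by (intro L_sum) auto
    have vL: "v \<in> L" unfolding v_def using L_diff[OF eL L_scale[OF rL]] .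
    have eq: "res t g (Suc n) a = (\<lambda>z. v z + W z)"
    proof
      fix z
      have "(\<Sum>i<n. (c i - a i - a n * d i) * g i z) = (\<Sum>i<n. c i * g i z) - (\<Sum>i<n. a i * g i z) - a n * (\<Sum>i<n. d i * g i z)"
        by (simp add: algebra_simps sum_subtractf sum_distrib_left sum.distrib)
      then show "res t g (Suc n) a z = v z + W z"
        unfolding v_def W_def e_def r_def res_def by (simp add: algebra_simps)
    qed
    have "ip v W = 0"
    proof -
      have "ip W e = 0" "ip W r = 0" unfolding W_def using oe or by auto
      then have "ip e W = 0" "ip r W = 0" using ip_sym WL eL rL by auto
      then show ?thesis unfolding v_def using ip_diff[OF eL L_scale[OF rL] WL] ip_scale[OF rL WL] by simp
    qed
    then have "ip (res t g (Suc n) a) (res t g (Suc n) a) = ip v v + ip W W"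
      unfolding eq using N_add[OF vL WL] by simp
    moreover have "ip W W \<ge> 0" using ip_pos[OF WL] .
    moreover have "ip (res t g (Suc n) cs) (res t g (Suc n) cs) \<le> ip v v"
      unfolding cs_eq v_def using best_s .
    ultimately show ?thesis by linarith
  qed
  then show ?case by blast
qed

lemma N_res_expand:
  assumes t: "t \<in> L" and g: "\<forall>i<n. g i \<in> L"
  shows "ip (res t g n c) (res t g n c) = ip t t - 2 * (\<Sum>i<n. c i * ip t (g i)) + (\<Sum>i<n. \<Sum>j<n. c i * c j * ip (g i) (g j))"
proof -
  define S where "S = (\<lambda>z. \<Sum>i<n. c i * g i z)"
  have SL: "S \<in> L" unfolding S_def using g by (intro L_sum) auto
  have r: "res t g n c = (\<lambda>z. t z - 1 * S z)" unfolding res_def S_def by simp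
  have "ip S t = (\<Sum>i<n. c i * ip (g i) t)" unfolding S_def using g t by (intro ip_sum) auto
  also have "\<dots> = (\<Sum>i<n. c i * ip t (g i))" using g t by (intro sum.cong refl) (metis ip_sym lessThan_iff)
  finally have 1: "ip t S = (\<Sum>i<n. c i * ip t (g i))" using ip_sym[OF t SL] by simp
  have 2: "ip (g i) S = (\<Sum>j<n. c j * ip (g i) (g j))" if i: "i < n" for i
  proof -
    have gi: "g i \<in> L" using g i by auto
    have "ip S (g i) = (\<Sum>j<n. c j * ip (g j) (g i))" unfolding S_def using g gi by (intro ip_sum) auto
    also have "\<dots> = (\<Sum>j<n. c j * ip (g i) (g j))" using g gi by (intro sum.cong refl) (metis ip_sym lessThan_iff)
    finally show ?thesis using ip_sym[OF gi SL] by simp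
  qed
  have "ip S S = (\<Sum>i<n. c i * ip (g i) S)" unfolding S_def using g SL by (intro ip_sum) (auto simp: S_def)
  also have "\<dots> = (\<Sum>i<n. \<Sum>j<n. c i * c j * ip (g i) (g j))"
    using 2 by (intro sum.cong refl) (simp add: sum_distrib_left mult.assoc)
  finally have 3: "ip S S = (\<Sum>i<n. \<Sum>j<n. c i * c j * ip (g i) (g j))" .
  show ?thesis unfolding r using N_diff_scale[OF t SL, of 1] 1 3 by simp
qed

end



definition L2 :: "'a measure \<Rightarrow> ('a \<Rightarrow> real) set" where
  "L2 M = {u. u \<in> borel_measurable M \<and> integrable M (\<lambda>z. (u z)^2)}"
definition ipM :: "'a measure \<Rightarrow> ('a \<Rightarrow> real) \<Rightarrow> ('a \<Rightarrow> real) \<Rightarrow> real" where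
  "ipM M u v = (\<integral>z. u z * v z \<partial>M)"

lemma abs_mult_le_sq: "\<bar>a * b\<bar> \<le> a^2 + (b::real)^2"
proof -
  have "0 \<le> (\<bar>a\<bar> - \<bar>b\<bar>)^2" by simp
  then have "2 * (\<bar>a\<bar> * \<bar>b\<bar>) \<le> \<bar>a\<bar>^2 + \<bar>b\<bar>^2" by (simp add: power2_eq_square algebra_simps)
  moreover have "0 \<le> \<bar>a\<bar> * \<bar>b\<bar>" by simp
  ultimately show ?thesis unfolding abs_mult power2_abs by linarith
qed

lemma int_prod: "u \<in> L2 M \<Longrightarrow> v \<in> L2 M \<Longrightarrow> integrable M (\<lambda>z. u z * v z)"
  by (rule Bochner_Integration.integrable_bound[where f="\<lambda>z. (u z)^2 + (v z)^2"])
     (auto simp: L2_def abs_mult_le_sq)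

lemma sip_L2: "sip (L2 M) (ipM M)"
proof
  show "(\<lambda>z. 0) \<in> L2 M" by (simp add: L2_def)
next
  fix u v assume u: "u \<in> L2 M" and v: "v \<in> L2 M"
  have "integrable M (\<lambda>z. (u z)^2 + 2 * (u z * v z) + (v z)^2)"
    using u v int_prod[OF u v] by (auto simp: L2_def)
  moreover have "(\<lambda>z. (u z)^2 + 2 * (u z * v z) + (v z)^2) = (\<lambda>z. (u z + v z)^2)"
    by (simp add: power2_eq_square algebra_simps)
  ultimately show "(\<lambda>z. u z + v z) \<in> L2 M" using u v by (auto simp: L2_def)
next
  fix u :: "'a \<Rightarrow> real" and a :: real assume u: "u \<in> L2 M"
  have "(\<lambda>z. (a * u z)^2) = (\<lambda>z. a^2 * (u z)^2)" by (simp add: power_mult_distrib)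
  then show "(\<lambda>z. a * u z) \<in> L2 M" using u by (auto simp: L2_def)
next
  fix u v w assume u: "u \<in> L2 M" and v: "v \<in> L2 M" and w: "w \<in> L2 M"
  show "ipM M (\<lambda>z. u z + v z) w = ipM M u w + ipM M v w"
    unfolding ipM_def using int_prod[OF u w] int_prod[OF v w]
    by (simp add: distrib_right)
next
  fix u w :: "'a \<Rightarrow> real" and a :: real
  show "ipM M (\<lambda>z. a * u z) w = a * ipM M u w"
    unfolding ipM_def by (simp add: mult.assoc)
next
  fix u v :: "'a \<Rightarrow> real"
  show "ipM M u v = ipM M v u" unfolding ipM_def by (simp add: mult.commute)
next
  fix u :: "'a \<Rightarrow> real"
  show "0 \<le> ipM M u u" unfolding ipM_def by (rule integral_nonneg_AE) simp
qed

lemma sum_split_add: "(\<Sum>i<a+b. f i) = (\<Sum>i<a. f i) + (\<Sum>i<b. f (a+i::nat))"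
  by (induct b) (simp_all add: add.assoc)

definition gz :: "(nat \<Rightarrow> 'x \<Rightarrow> real) \<Rightarrow> nat \<Rightarrow> ('x \<times> real) \<Rightarrow> real" where
  "gz G = (\<lambda>i z. G i (fst z))"

lemma MSE_res: "MSE P (\<lambda>x. \<Sum>i<k. c i * G i x) = ipM P (res snd (gz G) k c) (res snd (gz G) k c)"
  by (simp add: MSE_def ipM_def res_def gz_def power2_eq_square)

lemma MSE_nonneg: "MSE P f \<ge> 0"
  unfolding MSE_def by (rule integral_nonneg_AE) simp

lemma V_iff: "f \<in> V k G \<longleftrightarrow> (\<exists>c. f = (\<lambda>x. \<Sum>i<k. c i * G i x))"
  by (auto simp: V_def)

lemma R_le: "h \<in> V k G \<Longrightarrow> R P k G \<le> MSE P h"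
  unfolding R_def by (rule cINF_lower) (auto intro: MSE_nonneg simp: bdd_below_def)

lemma R_nonneg: "R P k G \<ge> 0"
  unfolding R_def by (rule cINF_greatest) (auto simp: MSE_nonneg V_def)

lemma R_le_Y: "R P k G \<le> MSE P (\<lambda>x. 0)"
proof -
  have "(\<lambda>x. 0) \<in> V k G" unfolding V_iff by (rule exI[of _ "\<lambda>_. 0"]) simp
  then show ?thesis by (rule R_le)
qed

lemma rat_approx: "(\<lambda>n. real_of_int \<lfloor>x * real (Suc n)\<rfloor> / real (Suc n)) \<longlonglongrightarrow> x"
proof (rule tendsto_sandwich[where f="\<lambda>n. x - inverse (real (Suc n))" and h="\<lambda>n. x"])
  show "\<forall>\<^sub>F n in sequentially. x - inverse (real (Suc n)) \<le> real_of_int \<lfloor>x * real (Suc n)\<rfloor> / real (Suc n)"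
  proof (intro always_eventually allI)
    fix n
    have "x * real (Suc n) - 1 \<le> real_of_int \<lfloor>x * real (Suc n)\<rfloor>" by linarith
    then have "(x * real (Suc n) - 1) / real (Suc n) \<le> real_of_int \<lfloor>x * real (Suc n)\<rfloor> / real (Suc n)"
      by (intro divide_right_mono) auto
    then show "x - inverse (real (Suc n)) \<le> real_of_int \<lfloor>x * real (Suc n)\<rfloor> / real (Suc n)"
      by (simp add: field_simps del: of_nat_Suc)
  qed
  show "\<forall>\<^sub>F n in sequentially. real_of_int \<lfloor>x * real (Suc n)\<rfloor> / real (Suc n) \<le> x"
  proof (intro always_eventually allI)
    fix n
    have "real_of_int \<lfloor>x * real (Suc n)\<rfloor> \<le> x * real (Suc n)" by linarith
    then show "real_of_int \<lfloor>x * real (Suc n)\<rfloor> / real (Suc n) \<le> x"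
      by (simp add: field_simps del: of_nat_Suc)
  qed
  show "(\<lambda>n. x - inverse (real (Suc n))) \<longlonglongrightarrow> x"
    using tendsto_diff[OF tendsto_const LIMSEQ_inverse_real_of_nat, of x] by simp
qed simp

definition Qk :: "nat \<Rightarrow> (nat \<Rightarrow> real) set" where "Qk k = PiE {..<k} (\<lambda>_. \<rat>)"

lemma countable_Qk: "countable (Qk k)"
  unfolding Qk_def by (intro countable_PiE) (auto intro: countable_rat)

lemma V_range: "V k G = range (\<lambda>c x. \<Sum>i<k. c i * G i x)"
  by (auto simp: V_def)

definition Hm :: "nat \<Rightarrow> (nat \<Rightarrow> 'a) \<times> (nat \<Rightarrow> 'a) \<Rightarrow> nat \<Rightarrow> 'a" where
  "Hm k = (\<lambda>p. merge {..<k} {k..<2*k} (fst p, \<lambda>n\<in>{k..<2*k}. snd p (n - k)))"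

lemma Hm_val: "i < 2*k \<Longrightarrow> Hm k p i = (if i < k then fst p i else snd p (i - k))"
  by (auto simp: Hm_def merge_def)

locale setting =
  fixes P :: "((real^'m) \<times> real) measure" and Q :: "(real^'m \<Rightarrow> real) measure"
  assumes P: "prob_space P" and sP: "sets P = sets borel" and Y: "integrable P (\<lambda>z. (snd z)^2)"
  and Qp: "prob_space Q" and ev: "(\<lambda>(g, x). g x) \<in> borel_measurable (Q \<Otimes>\<^sub>M (borel :: (real^'m) measure))"
  and gint: "\<forall>g\<in>space Q. integrable P (\<lambda>z. (g (fst z))^2)"
begin

lemma fst_meas: "fst \<in> measurable P (borel :: (real^'m) measure)"
proof -
  have "fst \<in> measurable ((borel :: (real^'m) measure) \<Otimes>\<^sub>M (borel :: real measure)) (borel :: (real^'m) measure)" by (rule measurable_fst)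
  then have "fst \<in> measurable (borel :: ((real^'m) \<times> real) measure) (borel :: (real^'m) measure)"
    by (simp add: borel_prod)
  moreover have "measurable P (borel :: (real^'m) measure) = measurable borel borel"
    by (rule measurable_cong_sets[OF sP refl])
  ultimately show ?thesis by simp
qed

lemma snd_meas: "snd \<in> borel_measurable P"
proof -
  have "snd \<in> measurable ((borel :: (real^'m) measure) \<Otimes>\<^sub>M (borel :: real measure)) (borel :: real measure)" by (rule measurable_snd)
  then have "snd \<in> measurable (borel :: ((real^'m) \<times> real) measure) (borel :: real measure)"
    by (simp add: borel_prod)
  moreover have "measurable P (borel :: real measure) = measurable borel borel"
    by (rule measurable_cong_sets[OF sP refl])
  ultimately show ?thesis by simp
qed

lemma g_meas: "g \<in> space Q \<Longrightarrow> g \<in> borel_measurable (borel :: (real^'m) measure)"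
  using measurable_Pair2[OF ev, of g] by simp

lemma gz_L2: "g \<in> space Q \<Longrightarrow> (\<lambda>z. g (fst z)) \<in> L2 P"
  unfolding L2_def using gint g_meas fst_meas by (auto intro: measurable_compose)

lemma snd_L2: "snd \<in> L2 P"
  unfolding L2_def using Y snd_meas by auto

lemma res_L2: "\<forall>i<k. G i \<in> space Q \<Longrightarrow> res snd (gz G) k c \<in> L2 P"
  using sip.res_L[OF sip_L2 snd_L2, of k "gz G"] gz_L2 by (simp add: gz_def)

lemma fit_props:
  assumes "\<forall>i<k. G i \<in> space Q"
  shows "fit P k G \<in> V k G \<and> MSE P (fit P k G) = R P k G"
proof -
  have g: "\<forall>i<k. gz G i \<in> L2 P" using assms gz_L2 by (simp add: gz_def)
  obtain c where c: "\<forall>a. ipM P (res snd (gz G) k c) (res snd (gz G) k c) \<le> ipM P (res snd (gz G) k a) (res snd (gz G) k a)"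
    using sip.best_exists[OF sip_L2 snd_L2 g] by blast
  define f0 where "f0 = (\<lambda>x. \<Sum>i<k. c i * G i x)"
  have ex: "f0 \<in> V k G \<and> (\<forall>h\<in>V k G. MSE P f0 \<le> MSE P h)"
    unfolding f0_def using c by (auto simp: V_iff MSE_res)
  have fit: "fit P k G \<in> V k G \<and> (\<forall>h\<in>V k G. MSE P (fit P k G) \<le> MSE P h)"
    unfolding fit_def by (rule someI[of _ f0]) (rule ex)
  have "R P k G = MSE P (fit P k G)"
    unfolding R_def using fit by (intro cInf_eq_minimum) auto
  then show ?thesis using fit by simp
qed

lemma pw_bound:
  assumes G: "\<forall>i<k. G i \<in> space Q" and G': "\<forall>i<k. G' i \<in> space Q"
    and H: "\<forall>i<2*k. H i = (if i < k then G i else G' (i - k))"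
  shows "Dis P (fit P k G) (fit P k G') \<le> 2 * R P k G + 2 * R P k G' - 4 * R P (2*k) H"
proof -
  obtain c where c: "fit P k G = (\<lambda>x. \<Sum>i<k. c i * G i x)" using fit_props[OF G] V_iff by blast
  obtain c' where c': "fit P k G' = (\<lambda>x. \<Sum>i<k. c' i * G' i x)" using fit_props[OF G'] V_iff by blast
  define w where "w = (\<lambda>i. if i < k then c i / 2 else c' (i - k) / 2)"
  define m where "m = (\<lambda>x. \<Sum>i<2*k. w i * H i x)"
  have mV: "m \<in> V (2*k) H" unfolding m_def V_iff by blast
  have m_eq: "m x = ((\<Sum>i<k. c i * G i x) + (\<Sum>i<k. c' i * G' i x)) / 2" for x
  proof -
    have "m x = (\<Sum>i<k. w i * H i x) + (\<Sum>i<k. w (k+i) * H (k+i) x)"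
      unfolding m_def mult_2 by (rule sum_split_add)
    also have "(\<Sum>i<k. w i * H i x) = (\<Sum>i<k. c i * G i x / 2)"
      using H by (intro sum.cong) (auto simp: w_def)
    also have "(\<Sum>i<k. w (k+i) * H (k+i) x) = (\<Sum>i<k. c' i * G' i x / 2)"
      using H by (intro sum.cong) (auto simp: w_def)
    finally show ?thesis by (simp add: sum_divide_distrib[symmetric] add_divide_distrib)
  qed
  define u1 where "u1 = (\<lambda>z. snd z - (\<Sum>i<k. c i * G i (fst z)))"
  define u2 where "u2 = (\<lambda>z. snd z - (\<Sum>i<k. c' i * G' i (fst z)))"
  define um where "um = (\<lambda>z. 1/2 * (u1 z + u2 z))"
  have u1L: "u1 \<in> L2 P" using res_L2[OF G, of c] unfolding u1_def res_def gz_def .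
  have u2L: "u2 \<in> L2 P" using res_L2[OF G', of c'] unfolding u2_def res_def gz_def .
  have umL: "um \<in> L2 P" unfolding um_def
    by (rule sip.L_scale[OF sip_L2 sip.L_add[OF sip_L2 u1L u2L]])
  have i1: "integrable P (\<lambda>z. (u1 z)^2)" using u1L by (simp add: L2_def)
  have i2: "integrable P (\<lambda>z. (u2 z)^2)" using u2L by (simp add: L2_def)
  have im: "integrable P (\<lambda>z. (um z)^2)" using umL by (simp add: L2_def)
  have "Dis P (fit P k G) (fit P k G') = (\<integral>z. 2 * (u1 z)^2 + 2 * (u2 z)^2 - 4 * (um z)^2 \<partial>P)"
    unfolding Dis_def c c' u1_def u2_def um_def
    by (intro Bochner_Integration.integral_cong refl) (simp add: power2_eq_square algebra_simps)
  also have "\<dots> = 2 * (\<integral>z. (u1 z)^2 \<partial>P) + 2 * (\<integral>z. (u2 z)^2 \<partial>P) - 4 * (\<integral>z. (um z)^2 \<partial>P)"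
    using i1 i2 im by simp
  also have "(\<integral>z. (u1 z)^2 \<partial>P) = R P k G"
    using fit_props[OF G] unfolding c MSE_def u1_def by simp
  also have "(\<integral>z. (u2 z)^2 \<partial>P) = R P k G'"
    using fit_props[OF G'] unfolding c' MSE_def u2_def by simp
  also have "(\<integral>z. (um z)^2 \<partial>P) = MSE P m"
    unfolding MSE_def um_def u1_def u2_def m_eq
    by (intro Bochner_Integration.integral_cong refl) (simp add: power2_eq_square algebra_simps)
  finally show ?thesis using R_le[OF mV, of P] by linarith
qed

lemma R_Q:
  assumes G: "\<forall>i<k. G i \<in> space Q"
  shows "R P k G = (INF c\<in>Qk k. MSE P (\<lambda>x. \<Sum>i<k. c i * G i x))"
proof -
  let ?phi = "\<lambda>c. MSE P (\<lambda>x. \<Sum>i<k. c i * G i x)"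
  have R: "R P k G = (INF c. ?phi c)" unfolding R_def V_range image_image ..
  have bdd: "bdd_below (?phi ` A)" for A by (rule bdd_belowI[of _ 0]) (auto intro: MSE_nonneg)
  have Qne: "Qk k \<noteq> {}"
  proof -
    have "(\<lambda>i\<in>{..<k}. 0) \<in> Qk k" unfolding Qk_def by auto
    then show ?thesis by blast
  qed
  have g: "\<forall>i<k. gz G i \<in> L2 P" using G gz_L2 by (simp add: gz_def)
  define A where "A = ipM P snd snd"
  define B where "B = (\<lambda>i. ipM P snd (gz G i))"
  define C where "C = (\<lambda>i j. ipM P (gz G i) (gz G j))"
  have expand: "?phi a = A - 2 * (\<Sum>i<k. a i * B i) + (\<Sum>i<k. \<Sum>j<k. a i * a j * C i j)" for a
    unfolding MSE_res A_def B_def C_def using sip.N_res_expand[OF sip_L2 snd_L2 g] by simp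
  have "(INF c. ?phi c) \<le> (INF c\<in>Qk k. ?phi c)"
    by (rule cINF_superset_mono[OF Qne bdd]) auto
  moreover have "(INF c\<in>Qk k. ?phi c) \<le> (INF c. ?phi c)"
  proof (rule cINF_greatest)
    fix c
    define r where "r = (\<lambda>n i. if i < k then real_of_int \<lfloor>c i * real (Suc n)\<rfloor> / real (Suc n) else undefined)"
    have rQ: "r n \<in> Qk k" for n
      unfolding Qk_def r_def by (auto simp: PiE_iff extensional_def intro: Rats_divide)
    have lim: "(\<lambda>n. r n i) \<longlonglongrightarrow> c i" if "i < k" for i
      using rat_approx[of "c i"] that by (simp add: r_def)
    have "(\<lambda>n. A - 2 * (\<Sum>i<k. r n i * B i) + (\<Sum>i<k. \<Sum>j<k. r n i * r n j * C i j))
          \<longlonglongrightarrow> A - 2 * (\<Sum>i<k. c i * B i) + (\<Sum>i<k. \<Sum>j<k. c i * c j * C i j)"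
      using lim by (intro tendsto_intros) auto
    then have "(\<lambda>n. ?phi (r n)) \<longlonglongrightarrow> ?phi c" unfolding expand .
    moreover have "(INF c\<in>Qk k. ?phi c) \<le> ?phi (r n)" for n
      by (rule cINF_lower[OF bdd rQ])
    ultimately show "(INF c\<in>Qk k. ?phi c) \<le> ?phi c"
      by (intro LIMSEQ_le_const) auto
  qed simp
  ultimately show ?thesis unfolding R by simp
qed

lemma comp_meas:
  assumes i: "i < k"
  shows "(\<lambda>p. fst p i (fst (snd p))) \<in> borel_measurable (PiM {..<k} (\<lambda>_. Q) \<Otimes>\<^sub>M P)"
proof -
  have 1: "(\<lambda>p. (fst p i, fst (snd p))) \<in> measurable (PiM {..<k} (\<lambda>_. Q) \<Otimes>\<^sub>M P) (Q \<Otimes>\<^sub>M (borel :: (real^'m) measure))"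
  proof (rule measurable_Pair)
    show "(\<lambda>p. fst p i) \<in> measurable (PiM {..<k} (\<lambda>_. Q) \<Otimes>\<^sub>M P) Q"
      using i by (intro measurable_compose[OF measurable_fst measurable_component_singleton]) auto
    show "(\<lambda>p. fst (snd p)) \<in> measurable (PiM {..<k} (\<lambda>_. Q) \<Otimes>\<^sub>M P) borel"
      by (rule measurable_compose[OF measurable_snd fst_meas])
  qed
  show ?thesis using measurable_compose[OF 1 ev] by simp
qed

lemma phi_meas:
  "(\<lambda>G. MSE P (\<lambda>x. \<Sum>i<k. c i * G i x)) \<in> borel_measurable (PiM {..<k} (\<lambda>_. Q))"
proof -
  interpret P: prob_space P by (rule P)
  have s: "(\<lambda>p. snd (snd p)) \<in> borel_measurable (PiM {..<k} (\<lambda>_. Q) \<Otimes>\<^sub>M P)"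
    by (rule measurable_compose[OF measurable_snd snd_meas])
  have "(\<lambda>p. (snd (snd p) - (\<Sum>i<k. c i * fst p i (fst (snd p))))^2) \<in> borel_measurable (PiM {..<k} (\<lambda>_. Q) \<Otimes>\<^sub>M P)"
    using comp_meas s by (intro borel_measurable_power borel_measurable_diff borel_measurable_sum borel_measurable_times borel_measurable_const) auto
  then have "case_prod (\<lambda>G z. (snd z - (\<Sum>i<k. c i * G i (fst z)))^2) \<in> borel_measurable (PiM {..<k} (\<lambda>_. Q) \<Otimes>\<^sub>M P)"
    by (simp add: split_beta')
  then show ?thesis unfolding MSE_def by (rule P.borel_measurable_lebesgue_integral)
qed

lemma R_meas: "R P k \<in> borel_measurable (PiM {..<k} (\<lambda>_. Q))"
proof -
  have meas: "(\<lambda>G. INF c\<in>Qk k. MSE P (\<lambda>x. \<Sum>i<k. c i * G i x)) \<in> borel_measurable (PiM {..<k} (\<lambda>_. Q))"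
    by (rule borel_measurable_cINF_real[OF countable_Qk phi_meas])
  have eq: "R P k G = (\<lambda>G. INF c\<in>Qk k. MSE P (\<lambda>x. \<Sum>i<k. c i * G i x)) G" if "G \<in> space (PiM {..<k} (\<lambda>_. Q))" for G
    using that by (intro R_Q) (auto simp: space_PiM PiE_iff)
  have "R P k \<in> borel_measurable (PiM {..<k} (\<lambda>_. Q)) \<longleftrightarrow> (\<lambda>G. INF c\<in>Qk k. MSE P (\<lambda>x. \<Sum>i<k. c i * G i x)) \<in> borel_measurable (PiM {..<k} (\<lambda>_. Q))"
    by (rule measurable_cong) (rule eq)
  then show ?thesis using meas by simp
qed

abbreviation PQ :: "nat \<Rightarrow> (nat \<Rightarrow> real^'m \<Rightarrow> real) measure" where "PQ k \<equiv> PiM {..<k} (\<lambda>_. Q)"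

lemma PQ_prob: "prob_space (PQ k)"
  by (rule prob_space_PiM) (rule Qp)

lemma sh_meas: "(\<lambda>b. \<lambda>n\<in>{k..<2*k}. b (n - k)) \<in> measurable (PQ k) (PiM {k..<2*k} (\<lambda>_. Q))"
  by (rule measurable_restrict) (auto intro!: measurable_component_singleton)

lemma sh_distr: "distr (PQ k) (PiM {k..<2*k} (\<lambda>_. Q)) (\<lambda>b. \<lambda>n\<in>{k..<2*k}. b (n - k)) = PiM {k..<2*k} (\<lambda>_. Q)"
proof -
  have inj: "inj_on (\<lambda>n. n - k) {k..<2*k}" by (auto simp: inj_on_def)
  have fn: "(\<lambda>n. n - k) \<in> {k..<2*k} \<rightarrow> {..<k}" by auto
  show ?thesis using distr_PiM_reindex[of "{..<k}" "\<lambda>_. Q", OF Qp inj fn] by simp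
qed

lemma pre_meas: "(\<lambda>p. (fst p, (\<lambda>n\<in>{k..<2*k}. snd p (n - k)))) \<in> measurable (PQ k \<Otimes>\<^sub>M PQ k) (PQ k \<Otimes>\<^sub>M PiM {k..<2*k} (\<lambda>_. Q))"
  by (intro measurable_Pair measurable_fst measurable_compose[OF measurable_snd sh_meas])

lemma pre_distr: "distr (PQ k \<Otimes>\<^sub>M PQ k) (PQ k \<Otimes>\<^sub>M PiM {k..<2*k} (\<lambda>_. Q)) (\<lambda>p. (fst p, (\<lambda>n\<in>{k..<2*k}. snd p (n - k))))
   = PQ k \<Otimes>\<^sub>M PiM {k..<2*k} (\<lambda>_. Q)"
proof -
  have sf: "sigma_finite_measure (distr (PQ k) (PiM {k..<2*k} (\<lambda>_. Q)) (\<lambda>b. \<lambda>n\<in>{k..<2*k}. b (n - k)))"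
    unfolding sh_distr using prob_space_PiM[of "{k..<2*k}" "\<lambda>_. Q"] Qp
    by (simp add: prob_space_imp_sigma_finite)
  have "distr (PQ k) (PQ k) (\<lambda>x. x) \<Otimes>\<^sub>M distr (PQ k) (PiM {k..<2*k} (\<lambda>_. Q)) (\<lambda>b. \<lambda>n\<in>{k..<2*k}. b (n - k))
     = distr (PQ k \<Otimes>\<^sub>M PQ k) (PQ k \<Otimes>\<^sub>M PiM {k..<2*k} (\<lambda>_. Q)) (\<lambda>(x, y). (x, (\<lambda>n\<in>{k..<2*k}. y (n - k))))"
    by (rule pair_measure_distr[OF measurable_id sh_meas sf])
  then show ?thesis unfolding sh_distr distr_id by (simp add: split_beta')
qed

lemma un: "{..<k} \<union> {k..<2*k} = {..<2*(k::nat)}" by auto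

lemma merge_distr: "distr (PQ k \<Otimes>\<^sub>M PiM {k..<2*k} (\<lambda>_. Q)) (PQ (2*k)) (merge {..<k} {k..<2*k}) = PQ (2*k)"
proof -
  interpret PS: product_sigma_finite "\<lambda>_. Q"
    unfolding product_sigma_finite_def using prob_space_imp_sigma_finite[OF Qp] by simp
  have disj: "{..<k} \<inter> {k..<2*k} = {}" by auto
  show ?thesis using PS.distr_merge[OF disj] unfolding un by simp
qed

lemma merge_meas: "merge {..<k} {k..<2*k} \<in> measurable (PQ k \<Otimes>\<^sub>M PiM {k..<2*k} (\<lambda>_. Q)) (PQ (2*k))"
  using measurable_merge[of "{..<k}" "{k..<2*k}" "\<lambda>_. Q"] unfolding un .

lemma Hm_comp: "Hm k = merge {..<k} {k..<2*k} \<circ> (\<lambda>p. (fst p, (\<lambda>n\<in>{k..<2*k}. snd p (n - k))))"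
  by (simp add: Hm_def fun_eq_iff)

lemma Hm_meas: "Hm k \<in> measurable (PQ k \<Otimes>\<^sub>M PQ k) (PQ (2*k))"
  unfolding Hm_comp by (rule measurable_comp[OF pre_meas merge_meas])

lemma Hm_distr: "distr (PQ k \<Otimes>\<^sub>M PQ k) (PQ (2*k)) (Hm k) = PQ (2*k)"
  unfolding Hm_comp using distr_distr[OF merge_meas pre_meas, symmetric] pre_distr merge_distr by simp

lemma Dis_nonneg: "Dis P f g \<ge> 0"
  unfolding Dis_def by (rule integral_nonneg_AE) simp

lemma main:
  assumes k: "k \<ge> 1"
  shows "(\<integral>\<^sup>+ GG. ennreal (Dis P (fit P k (fst GG)) (fit P k (snd GG))) \<partial>(PQ k \<Otimes>\<^sub>M PQ k))
         \<le> ennreal (4 * (Rbar P Q k - Rbar P Q (2 * k)))"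
proof -
  interpret PQk: prob_space "PQ k" by (rule PQ_prob)
  interpret PP: pair_prob_space "PQ k" "PQ k" by unfold_locales
  let ?M = "PQ k \<Otimes>\<^sub>M PQ k"
  define F where "F = (\<lambda>p. 2 * R P k (fst p) + 2 * R P k (snd p) - 4 * R P (2*k) (Hm k p))"
  have sp: "(\<forall>i<k. fst p i \<in> space Q) \<and> (\<forall>i<k. snd p i \<in> space Q)" if "p \<in> space ?M" for p
  proof -
    have sp1: "\<forall>i<k. G i \<in> space Q" if "G \<in> space (PQ k)" for G
      using that unfolding space_PiM by (auto intro: PiE_mem)
    have "fst p \<in> space (PQ k)" "snd p \<in> space (PQ k)"
      using that unfolding space_pair_measure by (auto simp: mem_Times_iff)
    then show ?thesis using sp1 by blast
  qed
  have le: "Dis P (fit P k (fst p)) (fit P k (snd p)) \<le> F p" if "p \<in> space ?M" for p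
    unfolding F_def using sp[OF that] by (intro pw_bound) (auto simp: Hm_val)
  have step1: "(\<integral>\<^sup>+ GG. ennreal (Dis P (fit P k (fst GG)) (fit P k (snd GG))) \<partial>?M) \<le> (\<integral>\<^sup>+ p. ennreal (F p) \<partial>?M)"
    using le by (intro nn_integral_mono ennreal_leI) auto
  define B where "B = MSE P (\<lambda>x. 0)"
  have bnd: "norm (R P n G) \<le> B" for n G using R_nonneg[of P n G] R_le_Y[of P n G] by (simp add: B_def)
  have m1: "(\<lambda>p. R P k (fst p)) \<in> borel_measurable ?M" by (rule measurable_compose[OF measurable_fst R_meas])
  have m2: "(\<lambda>p. R P k (snd p)) \<in> borel_measurable ?M" by (rule measurable_compose[OF measurable_snd R_meas])
  have m3: "(\<lambda>p. R P (2*k) (Hm k p)) \<in> borel_measurable ?M" by (rule measurable_compose[OF Hm_meas R_meas])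
  have i1: "integrable ?M (\<lambda>p. R P k (fst p))" by (rule PP.integrable_const_bound[OF _ m1]) (use bnd in auto)
  have i2: "integrable ?M (\<lambda>p. R P k (snd p))" by (rule PP.integrable_const_bound[OF _ m2]) (use bnd in auto)
  have i3: "integrable ?M (\<lambda>p. R P (2*k) (Hm k p))" by (rule PP.integrable_const_bound[OF _ m3]) (use bnd in auto)
  have iF: "integrable ?M F" unfolding F_def using i1 i2 i3 by simp
  have Fpos: "AE p in ?M. 0 \<le> F p" using le Dis_nonneg by (intro AE_I2) (meson order_trans)
  have step2: "(\<integral>\<^sup>+ p. ennreal (F p) \<partial>?M) = ennreal (\<integral>p. F p \<partial>?M)"
    by (rule nn_integral_eq_integral[OF iF Fpos])
  have "(\<integral>p. F p \<partial>?M) = 2 * (\<integral>p. R P k (fst p) \<partial>?M) + 2 * (\<integral>p. R P k (snd p) \<partial>?M) - 4 * (\<integral>p. R P (2*k) (Hm k p) \<partial>?M)"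
    unfolding F_def using i1 i2 i3 by simp
  also have "(\<integral>p. R P k (fst p) \<partial>?M) = Rbar P Q k"
  proof -
    have "integrable ?M (\<lambda>(x, y). R P k x)" using i1 by (simp add: split_beta')
    from PP.integral_fst[OF this] show ?thesis by (simp add: Rbar_def split_beta' PQk.prob_space)
  qed
  also have "(\<integral>p. R P k (snd p) \<partial>?M) = Rbar P Q k"
  proof -
    have "integrable ?M (\<lambda>(x, y). R P k y)" using i2 by (simp add: split_beta')
    from PP.integral_snd[OF this] show ?thesis by (simp add: Rbar_def split_beta' PQk.prob_space)
  qed
  also have "(\<integral>p. R P (2*k) (Hm k p) \<partial>?M) = Rbar P Q (2*k)"
    unfolding Rbar_def using integral_distr[OF Hm_meas R_meas] Hm_distr by simp
  finally have "(\<integral>p. F p \<partial>?M) = 4 * (Rbar P Q k - Rbar P Q (2 * k))" by simp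
  then show ?thesis using step1 step2 by simp
qed

end


theorem theorem1:
  fixes P :: "((real^'m) \<times> real) measure"
    and Q :: "(real^'m \<Rightarrow> real) measure"
    and k :: nat
  assumes "prob_space P"
    and "sets P = sets borel"
    and "integrable P (\<lambda>z. (snd z)^2)"
    and "prob_space Q"
    and "(\<lambda>(g, x). g x) \<in> borel_measurable (Q \<Otimes>\<^sub>M (borel :: (real^'m) measure))"
    and "\<forall>g\<in>space Q. integrable P (\<lambda>z. (g (fst z))^2)"
    and "k \<ge> 1"
  shows "(\<integral>\<^sup>+ GG. ennreal (Dis P (fit P k (fst GG)) (fit P k (snd GG)))
            \<partial>(PiM {..<k} (\<lambda>_. Q) \<Otimes>\<^sub>M PiM {..<k} (\<lambda>_. Q)))
         \<le> ennreal (4 * (Rbar P Q k - Rbar P Q (2 * k)))"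
  proof -
  have S: "setting P Q" by (rule setting.intro[OF assms(1) assms(2) assms(3) assms(4) assms(5) assms(6)])
  show ?thesis by (rule setting.main[OF S assms(7)])
qed

end
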